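(* Let $q_1$ be piecewise continuous on $I=[a,b]$ and let $u$ be a solution of $u''+q_1(t)u=0$ with $u(a)=u(b)=0$, $a,b$ consecutive zeros of $u$. Then for every $\eta\in(0,b-a)$ there exist a piecewise continuous function $q_2$ on $I$ and a subinterval $J\subset I$ of length at most $\eta$ such that the inequality $q_1(t)\le q_2(t)$ is satisfied only for $t\in J$, and Sturm's comparison theorem holds on $I$, i.e. every solution $v$ of $v''+q_2(t)v=0$ has at least one zero in $I$.
   Context: "Solution" always means a nontrivial (not identically zero) solution. *)

theory Defs
  imports "HOL-Analysis.Analysis"
begin

definition piecewise_cont :: "real \<Rightarrow> real \<Rightarrow> (real \<Rightarrow> real) \<Rightarrow> bool" where
  "piecewise_cont a b q \<longleftrightarrow>
     (\<exists>S. finite S \<and>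
        (\<forall>t\<in>{a..b} - S. continuous (at t within {a..b}) q) \<and>
        (\<forall>s\<in>S \<inter> {a<..b}. \<exists>l. (q \<longlongrightarrow> l) (at_left s)) \<and>
        (\<forall>s\<in>S \<inter> {a..<b}. \<exists>l. (q \<longlongrightarrow> l) (at_right s)))"

definition ode_solution :: "real \<Rightarrow> real \<Rightarrow> (real \<Rightarrow> real) \<Rightarrow> (real \<Rightarrow> real) \<Rightarrow> bool" where
  "ode_solution a b q u \<longleftrightarrow>
     (\<exists>u' S. finite S \<and> continuous_on {a..b} u' \<and>
        (\<forall>t\<in>{a..b}. (u has_real_derivative u' t) (at t within {a..b})) \<and>
        (\<forall>t\<in>{a..b} - S. (u' has_real_derivative (- q t * u t)) (at t within {a..b})))"

text \<open>"Solution" always means a nontrivial one.\<close>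
definition nontrivial_solution :: "real \<Rightarrow> real \<Rightarrow> (real \<Rightarrow> real) \<Rightarrow> (real \<Rightarrow> real) \<Rightarrow> bool" where
  "nontrivial_solution a b q u \<longleftrightarrow> ode_solution a b q u \<and> (\<exists>t\<in>{a..b}. u t \<noteq> 0)"

end

theory Submission imports Defs begin

lemma wronsk:
  fixes a b d :: real and q v :: "real \<Rightarrow> real"
  assumes ad: "a < d" and db: "d \<le> b" and sol: "ode_solution a b q v"
    and qc: "\<And>t. t \<in> {a..d} \<Longrightarrow> q t = (pi/(d-a))^2"
  shows "\<exists>t\<in>{a..d}. v t = 0"
proof (rule ccontr)
  assume nz: "\<not> (\<exists>t\<in>{a..d}. v t = 0)"
  obtain v' S where S: "finite S" and v'c: "continuous_on {a..b} v'"
    and dv: "\<And>t. t\<in>{a..b} \<Longrightarrow> (v has_real_derivative v' t) (at t within {a..b})"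
    and dv': "\<And>t. t\<in>{a..b} - S \<Longrightarrow> (v' has_real_derivative (- q t * v t)) (at t within {a..b})"
    using sol unfolding ode_solution_def by blast
  define k where "k = pi/(d-a)"
  have kpos: "k > 0" using ad by (simp add: k_def)
  have kda: "k * (d - a) = pi" using ad by (simp add: k_def)
  define F where "F t = v' t * sin (k*(t-a)) - v t * (k * cos (k*(t-a)))" for t
  have vc: "continuous_on {a..b} v"
    using dv by (meson DERIV_continuous continuous_on_eq_continuous_within)
  have Fc: "continuous_on {a..d} F"
  proof -
    have "continuous_on {a..d} v" "continuous_on {a..d} v'"
      using vc v'c db by (auto elim: continuous_on_subset)
    then show ?thesis unfolding F_def by (intro continuous_intros)
  qed
  have FD: "(F has_vector_derivative 0) (at t)" if t: "t \<in> {a<..<d} - S" for t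
  proof -
    have int: "t \<in> interior {a..b}" using t db by auto
    have tab: "t \<in> {a..b}" using t db by auto
    have d1: "(v has_real_derivative v' t) (at t)"
      using dv[OF tab] at_within_interior[OF int] by simp
    have d2: "(v' has_real_derivative (- (k^2 * v t))) (at t)"
      using dv'[of t] t db at_within_interior[OF int] qc[of t] by (auto simp: k_def)
    have ds: "((\<lambda>t. sin (k*(t-a))) has_real_derivative (cos (k*(t-a)) * k)) (at t)"
      by (auto intro!: derivative_eq_intros)
    have dc: "((\<lambda>t. k * cos (k*(t-a))) has_real_derivative (k * (- sin (k*(t-a)) * k))) (at t)"
      by (auto intro!: derivative_eq_intros)
    have D: "(F has_real_derivative
       ((- (k^2 * v t)) * sin (k*(t-a)) + (cos (k*(t-a)) * k) * v' t
        - (v' t * (k * cos (k*(t-a))) + (k * (- sin (k*(t-a)) * k)) * v t))) (at t)"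
      unfolding F_def
      by (rule DERIV_diff[OF DERIV_mult[OF d2 ds] DERIV_mult[OF d1 dc]])
    have Z: "((- (k^2 * v t)) * sin (k*(t-a)) + (cos (k*(t-a)) * k) * v' t
        - (v' t * (k * cos (k*(t-a))) + (k * (- sin (k*(t-a)) * k)) * v t)) = 0"
      by (simp add: algebra_simps power2_eq_square)
    show ?thesis using D unfolding Z has_real_derivative_iff_has_vector_derivative .
  qed
  have "((\<lambda>_. 0::real) has_integral (F d - F a)) {a..d}"
    by (rule fundamental_theorem_of_calculus_interior_strong[OF S]) (use ad FD Fc in auto)
  then have "F d - F a = 0" using has_integral_0 has_integral_unique by blast
  moreover have "F a = - v a * k" by (simp add: F_def)
  moreover have "F d = v d * k" by (simp add: F_def kda)
  ultimately have "(v a + v d) * k = 0" by (simp add: algebra_simps)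
  then have vad: "v a = - v d" using kpos by simp
  have vcd: "continuous_on {a..d} v" using vc db by (auto elim: continuous_on_subset)
  show False
  proof (cases "v a \<le> 0")
    case True
    then have "v d \<ge> 0" using vad by simp
    then obtain t where "t \<ge> a" "t \<le> d" "v t = 0" using IVT'[OF True _ _ vcd] ad by force
    then show False using nz by auto
  next
    case False
    then have "v d \<le> 0" using vad by simp
    then obtain t where "t \<ge> a" "t \<le> d" "v t = 0" using IVT2'[of v d 0 a, OF _ _ _ vcd] False ad by force
    then show False using nz by auto
  qed
qed

lemma pc_left:
  assumes "piecewise_cont a b q" "s \<in> {a<..b}"
  shows "\<exists>l. (q \<longlongrightarrow> l) (at_left s)"
proof -
  obtain S where S: "finite S" "\<forall>t\<in>{a..b} - S. continuous (at t within {a..b}) q"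
     "\<forall>s\<in>S \<inter> {a<..b}. \<exists>l. (q \<longlongrightarrow> l) (at_left s)"
    using assms(1) unfolding piecewise_cont_def by blast
  show ?thesis
  proof (cases "s \<in> S")
    case True then show ?thesis using S assms(2) by blast
  next
    case False
    then have "(q \<longlongrightarrow> q s) (at s within {a..b})" using S assms(2)
      by (auto simp: continuous_within)
    then have "(q \<longlongrightarrow> q s) (at s within {a..s})"
      by (rule tendsto_within_subset) (use assms(2) in auto)
    then show ?thesis using at_within_Icc_at_left[of a s] assms(2) by auto
  qed
qed

lemma pc_right:
  assumes "piecewise_cont a b q" "s \<in> {a..<b}"
  shows "\<exists>l. (q \<longlongrightarrow> l) (at_right s)"
proof -
  obtain S where S: "finite S" "\<forall>t\<in>{a..b} - S. continuous (at t within {a..b}) q"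
     "\<forall>s\<in>S \<inter> {a..<b}. \<exists>l. (q \<longlongrightarrow> l) (at_right s)"
    using assms(1) unfolding piecewise_cont_def by blast
  show ?thesis
  proof (cases "s \<in> S")
    case True then show ?thesis using S assms(2) by blast
  next
    case False
    then have "(q \<longlongrightarrow> q s) (at s within {a..b})" using S assms(2)
      by (auto simp: continuous_within)
    then have "(q \<longlongrightarrow> q s) (at s within {s..b})"
      by (rule tendsto_within_subset) (use assms(2) in auto)
    then show ?thesis using at_within_Icc_at_right[of s b] assms(2) by auto
  qed
qed

lemma pc_glue:
  fixes K d :: real
  assumes pc: "piecewise_cont a b q"
  shows "piecewise_cont a b (\<lambda>t. if t \<le> d then K else q t - 1)" (is "piecewise_cont a b ?q2")
proof -
  obtain S where S: "finite S" "\<forall>t\<in>{a..b} - S. continuous (at t within {a..b}) q"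
    using pc unfolding piecewise_cont_def by blast
  have C: "continuous (at t within {a..b}) ?q2" if t: "t \<in> {a..b} - insert d S" for t
  proof (cases "t < d")
    case True
    have "((\<lambda>_. K) \<longlongrightarrow> K) (at t within {a..b})" by simp
    then have "(?q2 \<longlongrightarrow> K) (at t within {a..b})"
      by (rule Lim_transform_within[where d="d - t"]) (use True in \<open>auto simp: dist_real_def\<close>)
    then show ?thesis using True by (simp add: continuous_within)
  next
    case False
    then have td: "t > d" using t by auto
    have "(q \<longlongrightarrow> q t) (at t within {a..b})" using S t by (auto simp: continuous_within)
    then have "((\<lambda>x. q x - 1) \<longlongrightarrow> q t - 1) (at t within {a..b})" by (intro tendsto_intros)
    then have "(?q2 \<longlongrightarrow> q t - 1) (at t within {a..b})"
      by (rule Lim_transform_within[where d="t - d"]) (use td in \<open>auto simp: dist_real_def\<close>)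
    then show ?thesis using td by (simp add: continuous_within)
  qed
  have L: "\<exists>l. (?q2 \<longlongrightarrow> l) (at_left s)" if s: "s \<in> {a<..b}" for s
  proof (cases "s \<le> d")
    case True
    have "eventually (\<lambda>x. x < s) (at_left s)" by (simp add: eventually_at_filter)
    then have "eventually (\<lambda>x. K = ?q2 x) (at_left s)"
      by (rule eventually_mono) (use True in simp)
    then show ?thesis by (intro exI[of _ K] Lim_transform_eventually[OF tendsto_const])
  next
    case False
    obtain l where l: "(q \<longlongrightarrow> l) (at_left s)" using pc_left[OF pc s] by blast
    then have lim: "((\<lambda>x. q x - 1) \<longlongrightarrow> l - 1) (at_left s)" by (intro tendsto_intros)
    have ev: "eventually (\<lambda>x. q x - 1 = ?q2 x) (at_left s)"
      unfolding eventually_at_left[of d s, OF \<open>\<not> s \<le> d\<close>[unfolded not_le]]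
      by (rule exI[of _ d]) (use False in auto)
    show ?thesis by (intro exI[of _ "l - 1"] Lim_transform_eventually[OF lim ev])
  qed
  have R: "\<exists>l. (?q2 \<longlongrightarrow> l) (at_right s)" if s: "s \<in> {a..<b}" for s
  proof (cases "s < d")
    case True
    have "eventually (\<lambda>x. K = ?q2 x) (at_right s)"
      unfolding eventually_at_right[of s d, OF True]
      by (rule exI[of _ d]) (use True in auto)
    then show ?thesis by (intro exI[of _ K] Lim_transform_eventually[OF tendsto_const])
  next
    case False
    obtain l where l: "(q \<longlongrightarrow> l) (at_right s)" using pc_right[OF pc s] by blast
    then have lim: "((\<lambda>x. q x - 1) \<longlongrightarrow> l - 1) (at_right s)" by (intro tendsto_intros)
    have "eventually (\<lambda>x. s < x) (at_right s)" by (simp add: eventually_at_filter)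
    then have ev: "eventually (\<lambda>x. q x - 1 = ?q2 x) (at_right s)"
      by (rule eventually_mono) (use False in simp)
    show ?thesis by (intro exI[of _ "l - 1"] Lim_transform_eventually[OF lim ev])
  qed
  show ?thesis unfolding piecewise_cont_def
  proof (rule exI[of _ "insert d S"], intro conjI ballI)
    show "finite (insert d S)" using S by simp
  next
    fix t assume "t \<in> {a..b} - insert d S" then show "continuous (at t within {a..b}) ?q2" by (rule C)
  next
    fix t assume "t \<in> insert d S \<inter> {a<..b}" then show "\<exists>l. (?q2 \<longlongrightarrow> l) (at_left t)" using L by blast
  next
    fix t assume "t \<in> insert d S \<inter> {a..<b}" then show "\<exists>l. (?q2 \<longlongrightarrow> l) (at_right t)" using R by blast
  qed
qed

theorem theorem5:
  fixes a b :: real and q1 u :: "real \<Rightarrow> real"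
  assumes "a < b"
    and "piecewise_cont a b q1"
    and "nontrivial_solution a b q1 u"
    and "u a = 0" and "u b = 0"
    and "\<forall>t\<in>{a<..<b}. u t \<noteq> 0"
  shows "\<forall>\<eta>. 0 < \<eta> \<and> \<eta> < b - a \<longrightarrow>
           (\<exists>q2 c d. piecewise_cont a b q2 \<and> a \<le> c \<and> c \<le> d \<and> d \<le> b \<and> d - c \<le> \<eta> \<and>
              {t\<in>{a..b}. q1 t \<le> q2 t} \<subseteq> {c..d} \<and>
              (\<forall>v. nontrivial_solution a b q2 v \<longrightarrow> (\<exists>t\<in>{a..b}. v t = 0)))"
proof (intro allI impI)
  fix \<eta> :: real assume eta: "0 < \<eta> \<and> \<eta> < b - a"
  define d where "d = a + \<eta>"
  define q2 where "q2 = (\<lambda>t. if t \<le> d then (pi/(d-a))^2 else q1 t - 1)"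
  have "piecewise_cont a b q2" unfolding q2_def by (rule pc_glue[OF assms(2)])
  moreover have "{t\<in>{a..b}. q1 t \<le> q2 t} \<subseteq> {a..d}" by (auto simp: q2_def split: if_splits)
  moreover have "\<exists>t\<in>{a..b}. v t = 0" if "nontrivial_solution a b q2 v" for v
  proof -
    have sol: "ode_solution a b q2 v" using that by (simp add: nontrivial_solution_def)
    have "\<exists>t\<in>{a..d}. v t = 0"
      by (rule wronsk[OF _ _ sol]) (use eta in \<open>auto simp: d_def q2_def\<close>)
    then show ?thesis using eta by (auto simp: d_def)
  qed
  ultimately show "\<exists>q2 c d. piecewise_cont a b q2 \<and> a \<le> c \<and> c \<le> d \<and> d \<le> b \<and> d - c \<le> \<eta> \<and>
              {t\<in>{a..b}. q1 t \<le> q2 t} \<subseteq> {c..d} \<and>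
              (\<forall>v. nontrivial_solution a b q2 v \<longrightarrow> (\<exists>t\<in>{a..b}. v t = 0))"
    using eta by (intro exI[of _ q2] exI[of _ a] exI[of _ d]) (auto simp: d_def)
qed

end
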